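(* Let $f\in\mathcal S'(\mathbb R^d)$ (possibly depending on time), $s\ge0$, $r\in[1,\infty]$ and $t>0$. Then $$\|f\|_{\widetilde L^r_t(\dot{\mathbb B}^s_{2,1})}\le\|f\|^\ell_{\widetilde L^r_t(\dot{\mathbb B}^s_{2,1})}+2^{k_0}\|\varepsilon b(\tau)f\|^h_{\widetilde L^r_t(\dot{\mathbb B}^{s+1}_{2,1})}$$ and $$\|f\|_{\widetilde L^r_t(\dot{\mathbb B}^s_{2,1})}\le2^{-k_0}\|(\varepsilon b(\tau))^{-1}f\|^\ell_{\widetilde L^r_t(\dot{\mathbb B}^{s-1}_{2,1})}+\|f\|^h_{\widetilde L^r_t(\dot{\mathbb B}^s_{2,1})}.$$
   Context: Parameters: $\varepsilon\in(0,1]$, $\mu>0$, $\lambda\le1$, $b(t)=(1+t)^\lambda/\mu$, $k_0\in\mathbb Z$ a fixed constant, $J_t=\lfloor\log_2\frac{1}{\varepsilon b(t)}\rfloor-k_0$. $\dot\Delta_j$ are homogeneous Littlewood–Paley blocks. $\|f\|_{\widetilde L^r_t(\dot{\mathbb B}^s_{2,1})}=\sum_{j\in\mathbb Z}2^{js}\|\|\dot\Delta_jf(\tau)\|_{L^2}\|_{L^r(0,t)}$. With $I^\ell_{j,t}=\{\tau\in[0,t]:j\le J_\tau\}$, $I^h_{j,t}=\{\tau\in[0,t]:j\ge J_\tau\}$: $\|f\|^\ell_{\widetilde L^r_t(\dot{\mathbb B}^s_{2,1})}=\sum_{j:I^\ell_{j,t}\neq\emptyset}2^{js}\|\|\dot\Delta_jf(\tau)\|_{L^2}\|_{L^r(I^\ell_{j,t})}$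 and $\|f\|^h_{\widetilde L^r_t(\dot{\mathbb B}^s_{2,1})}$ defined likewise with $I^h_{j,t}$. *)

theory Defs
  imports "HOL-Analysis.Analysis" "HOL-Probability.Essential_Supremum"
begin

definition enn_powr :: "ennreal \<Rightarrow> real \<Rightarrow> ennreal" where
  "enn_powr x p = (if x = \<infinity> then \<infinity> else ennreal (enn2real x powr p))"

definition Lr_norm_on :: "ereal \<Rightarrow> real set \<Rightarrow> (real \<Rightarrow> ennreal) \<Rightarrow> ennreal" where
  "Lr_norm_on r S \<phi> =
     (if r = \<infinity> then esssup lborel (\<lambda>\<tau>. indicator S \<tau> * \<phi> \<tau>)
      else enn_powr (\<integral>\<^sup>+ \<tau>. indicator S \<tau> * enn_powr (\<phi> \<tau>) (real_of_ereal r) \<partial>lborel)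
                    (1 / real_of_ereal r))"

text \<open>Chemin--Lerner type norm
  \<open>\<Sum>_{j : I j \<noteq> {}} 2^{js} \<parallel> g j \<parallel>_{L^r(I j)}\<close>, where \<open>g j \<tau>\<close> stands for
  \<open>\<parallel>\<Delta>_j f(\<tau>)\<parallel>_{L^2}\<close> and \<open>I j\<close> is the time set attached to frequency \<open>j\<close>.\<close>
definition CL_norm :: "ereal \<Rightarrow> real \<Rightarrow> (int \<Rightarrow> real set) \<Rightarrow> (int \<Rightarrow> real \<Rightarrow> ennreal) \<Rightarrow> ennreal" where
  "CL_norm r s I g =
     (\<integral>\<^sup>+ j. (if I j \<noteq> {} then ennreal (2 powr (real_of_int j * s)) * Lr_norm_on r (I j) (g j) else 0)
        \<partial>count_space UNIV)"

definition bfun :: "real \<Rightarrow> real \<Rightarrow> real \<Rightarrow> real" where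
  "bfun \<mu> lam t = (1 + t) powr lam / \<mu>"

definition Jfun :: "real \<Rightarrow> real \<Rightarrow> real \<Rightarrow> int \<Rightarrow> real \<Rightarrow> int" where
  "Jfun \<epsilon> \<mu> lam k0 t = \<lfloor>log 2 (1 / (\<epsilon> * bfun \<mu> lam t))\<rfloor> - k0"

definition Ilow :: "real \<Rightarrow> real \<Rightarrow> real \<Rightarrow> int \<Rightarrow> real \<Rightarrow> int \<Rightarrow> real set" where
  "Ilow \<epsilon> \<mu> lam k0 t j = {\<tau> \<in> {0..t}. j \<le> Jfun \<epsilon> \<mu> lam k0 \<tau>}"

definition Ihigh :: "real \<Rightarrow> real \<Rightarrow> real \<Rightarrow> int \<Rightarrow> real \<Rightarrow> int \<Rightarrow> real set" where
  "Ihigh \<epsilon> \<mu> lam k0 t j = {\<tau> \<in> {0..t}. j \<ge> Jfun \<epsilon> \<mu> lam k0 \<tau>}"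

end

theory Submission
  imports Defs
begin

lemma enn_powr_meas[measurable]:
  assumes [measurable]: "f \<in> borel_measurable M"
  shows "(\<lambda>x. enn_powr (f x) p) \<in> borel_measurable M"
  unfolding enn_powr_def by measurable

lemma J_meas[measurable]: "(\<lambda>x. Jfun e m l k x) \<in> borel_measurable borel"
  unfolding Jfun_def bfun_def by measurable

lemma enn_powr_zero: "q > 0 \<Longrightarrow> enn_powr 0 q = 0"
  by (simp add: enn_powr_def)

lemma enn_powr_mono: "x \<le> y \<Longrightarrow> 0 \<le> q \<Longrightarrow> enn_powr x q \<le> enn_powr y q"
proof (cases "y = \<infinity>")
  case True then show ?thesis by (simp add: enn_powr_def)
next
  case False
  assume xy: "x \<le> y" and q: "0 \<le> q"
  then have "x \<noteq> \<infinity>" using False top.extremum_unique by fastforce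
  have "enn2real x \<le> enn2real y" using xy False by (simp add: enn2real_mono top.not_eq_extremum)
  then have "enn2real x powr q \<le> enn2real y powr q" using q by (simp add: powr_mono2)
  then show ?thesis using False \<open>x \<noteq> \<infinity>\<close> by (simp add: enn_powr_def ennreal_leI)
qed

lemma enn_powr_cmult: "c > 0 \<Longrightarrow> enn_powr (ennreal c * x) p = ennreal (c powr p) * enn_powr x p"
proof (cases "x = \<infinity>")
  case True
  assume c: "c > 0"
  then have "ennreal c * x = \<infinity>" using True by (simp add: ennreal_mult_top)
  moreover have "ennreal (c powr p) * \<infinity> = \<infinity>" using c by (simp add: ennreal_mult_top)
  ultimately show ?thesis using True by (simp add: enn_powr_def)
next
  case False
  assume c: "c > 0"
  then have ne: "ennreal c * x \<noteq> \<infinity>" using False by (simp add: ennreal_mult_eq_top_iff)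
  have "enn2real (ennreal c * x) = c * enn2real x" using c by (simp add: enn2real_mult)
  then have "enn2real (ennreal c * x) powr p = c powr p * enn2real x powr p"
    using c by (simp add: powr_mult)
  then show ?thesis using ne False c by (simp add: enn_powr_def ennreal_mult)
qed

lemma powr_add_le:
  fixes a b q :: real
  assumes a: "0 \<le> a" and b: "0 \<le> b" and q: "0 < q" "q \<le> 1"
  shows "(a + b) powr q \<le> a powr q + b powr q"
proof (cases "a + b = 0")
  case True then show ?thesis using a b by simp
next
  case False
  then have ab: "a + b > 0" using a b by simp
  define u where "u = a / (a+b)"
  define v where "v = b / (a+b)"
  have u: "0 \<le> u" "u \<le> 1" using a b ab by (auto simp: u_def)
  have v: "0 \<le> v" "v \<le> 1" using a b ab by (auto simp: v_def)
  have uv: "u + v = 1" using ab by (simp add: u_def v_def add_divide_distrib[symmetric])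
  have "u \<le> u powr q"
  proof (cases "u = 0")
    case False
    then have "u powr 1 \<le> u powr q" using u q by (intro powr_mono') auto
    then show ?thesis using False u by simp
  qed simp
  moreover have "v \<le> v powr q"
  proof (cases "v = 0")
    case False
    then have "v powr 1 \<le> v powr q" using v q by (intro powr_mono') auto
    then show ?thesis using False v by simp
  qed simp
  ultimately have "1 \<le> u powr q + v powr q" using uv by simp
  then have "(a+b) powr q * 1 \<le> (a+b) powr q * (u powr q + v powr q)"
    by (intro mult_left_mono) auto
  also have "\<dots> = ((a+b) * u) powr q + ((a+b) * v) powr q"
    using ab u v by (simp add: powr_mult distrib_left)
  also have "\<dots> = a powr q + b powr q" using ab by (simp add: u_def v_def)
  finally show ?thesis by simp
qed

lemma enn_powr_subadd:
  assumes "0 < q" "q \<le> 1"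
  shows "enn_powr (a + b) q \<le> enn_powr a q + enn_powr b q"
proof (cases "a = \<infinity> \<or> b = \<infinity>")
  case True then show ?thesis by (auto simp: enn_powr_def)
next
  case False
  then have ne: "a + b \<noteq> \<infinity>" by simp
  have "enn2real (a + b) = enn2real a + enn2real b" using False
    by (simp add: enn2real_plus less_top)
  then have "enn2real (a+b) powr q \<le> enn2real a powr q + enn2real b powr q"
    using powr_add_le[of "enn2real a" "enn2real b" q] assms by simp
  note le = this
  have "enn_powr (a+b) q = ennreal (enn2real (a+b) powr q)" using ne by (simp add: enn_powr_def)
  also have "\<dots> \<le> ennreal (enn2real a powr q + enn2real b powr q)" by (rule ennreal_leI) (fact le)
  also have "\<dots> = ennreal (enn2real a powr q) + ennreal (enn2real b powr q)" by (rule ennreal_plus) auto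
  also have "\<dots> = enn_powr a q + enn_powr b q" using False by (simp add: enn_powr_def)
  finally show ?thesis .
qed

lemma Lr_empty: "1 \<le> r \<Longrightarrow> Lr_norm_on r {} \<phi> = 0"
proof -
  assume r: "1 \<le> r"
  show ?thesis
  proof (cases "r = \<infinity>")
    case True
    have "emeasure lborel (space lborel) \<noteq> 0" by simp
    then show ?thesis using True by (simp add: Lr_norm_on_def esssup_const)
  next
    case False
    then have "real_of_ereal r \<ge> 1" using r by (cases r) auto
    then show ?thesis using False by (simp add: Lr_norm_on_def enn_powr_zero)
  qed
qed

lemma r_real: "1 \<le> r \<Longrightarrow> r \<noteq> \<infinity> \<Longrightarrow> real_of_ereal r \<ge> 1"
  by (cases r) auto

lemma Lr_mono:
  assumes r: "1 \<le> r" and S[measurable]: "S \<in> sets borel"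
    and \<phi>[measurable]: "\<phi> \<in> borel_measurable borel"
    and ST: "S \<subseteq> T" and le: "\<And>\<tau>. \<tau> \<in> S \<Longrightarrow> \<phi> \<tau> \<le> \<psi> \<tau>"
  shows "Lr_norm_on r S \<phi> \<le> Lr_norm_on r T \<psi>"
proof (cases "r = \<infinity>")
  case True
  have pw: "indicator S \<tau> * \<phi> \<tau> \<le> indicator T \<tau> * \<psi> \<tau>" for \<tau>
    using le[of \<tau>] ST by (auto simp: indicator_def)
  have "esssup lborel (\<lambda>\<tau>. indicator S \<tau> * \<phi> \<tau>) \<le> esssup lborel (\<lambda>\<tau>. indicator T \<tau> * \<psi> \<tau>)"
    by (rule esssup_mono) (use pw in auto)
  then show ?thesis using True by (simp add: Lr_norm_on_def)
next
  case False
  define p where "p = real_of_ereal r"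
  have p: "p \<ge> 1" using r_real[OF r False] p_def by simp
  have pw: "indicator S \<tau> * enn_powr (\<phi> \<tau>) p \<le> indicator T \<tau> * enn_powr (\<psi> \<tau>) p" for \<tau>
    using le[of \<tau>] ST p enn_powr_mono[of "\<phi> \<tau>" "\<psi> \<tau>" p] by (auto simp: indicator_def)
  have "(\<integral>\<^sup>+ \<tau>. indicator S \<tau> * enn_powr (\<phi> \<tau>) p \<partial>lborel) \<le> (\<integral>\<^sup>+ \<tau>. indicator T \<tau> * enn_powr (\<psi> \<tau>) p \<partial>lborel)"
    by (rule nn_integral_mono) (rule pw)
  then have "enn_powr (\<integral>\<^sup>+ \<tau>. indicator S \<tau> * enn_powr (\<phi> \<tau>) p \<partial>lborel) (1/p) \<le> enn_powr (\<integral>\<^sup>+ \<tau>. indicator T \<tau> * enn_powr (\<psi> \<tau>) p \<partial>lborel) (1/p)"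
    using p by (intro enn_powr_mono) auto
  then show ?thesis using False by (simp add: Lr_norm_on_def p_def)
qed

lemma Lr_scale:
  assumes r: "1 \<le> r" and S[measurable]: "S \<in> sets borel"
    and \<phi>[measurable]: "\<phi> \<in> borel_measurable borel" and c: "c > 0"
  shows "Lr_norm_on r S (\<lambda>\<tau>. ennreal c * \<phi> \<tau>) \<le> ennreal c * Lr_norm_on r S \<phi>"
proof (cases "r = \<infinity>")
  case True
  define E where "E = esssup lborel (\<lambda>\<tau>. indicator S \<tau> * \<phi> \<tau>)"
  have "AE \<tau> in lborel. indicator S \<tau> * \<phi> \<tau> \<le> E" unfolding E_def by (rule esssup_AE)
  then have "AE \<tau> in lborel. indicator S \<tau> * (ennreal c * \<phi> \<tau>) \<le> ennreal c * E"
  proof (rule AE_mp, intro AE_I2 impI)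
    fix \<tau> assume "indicator S \<tau> * \<phi> \<tau> \<le> E"
    then have "ennreal c * (indicator S \<tau> * \<phi> \<tau>) \<le> ennreal c * E" by (rule mult_left_mono) auto
    then show "indicator S \<tau> * (ennreal c * \<phi> \<tau>) \<le> ennreal c * E" by (simp add: ac_simps)
  qed
  then have "esssup lborel (\<lambda>\<tau>. indicator S \<tau> * (ennreal c * \<phi> \<tau>)) \<le> ennreal c * E"
    by (intro esssup_I) auto
  then show ?thesis using True by (simp add: Lr_norm_on_def E_def)
next
  case False
  define p where "p = real_of_ereal r"
  have p: "p \<ge> 1" using r_real[OF r False] p_def by simp
  have "(\<integral>\<^sup>+ \<tau>. indicator S \<tau> * enn_powr (ennreal c * \<phi> \<tau>) p \<partial>lborel)
      = (\<integral>\<^sup>+ \<tau>. ennreal (c powr p) * (indicator S \<tau> * enn_powr (\<phi> \<tau>) p) \<partial>lborel)"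
    using c by (intro nn_integral_cong) (simp add: enn_powr_cmult ac_simps)
  also have "\<dots> = ennreal (c powr p) * (\<integral>\<^sup>+ \<tau>. indicator S \<tau> * enn_powr (\<phi> \<tau>) p \<partial>lborel)"
    by (rule nn_integral_cmult) measurable
  finally have eq: "(\<integral>\<^sup>+ \<tau>. indicator S \<tau> * enn_powr (ennreal c * \<phi> \<tau>) p \<partial>lborel)
      = ennreal (c powr p) * (\<integral>\<^sup>+ \<tau>. indicator S \<tau> * enn_powr (\<phi> \<tau>) p \<partial>lborel)" .
  have cp: "(c powr p) powr (1/p) = c" using c p by (simp add: powr_powr)
  have "Lr_norm_on r S (\<lambda>\<tau>. ennreal c * \<phi> \<tau>) = ennreal ((c powr p) powr (1/p)) * enn_powr (\<integral>\<^sup>+ \<tau>. indicator S \<tau> * enn_powr (\<phi> \<tau>) p \<partial>lborel) (1/p)"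
    using False c unfolding Lr_norm_on_def p_def[symmetric] eq by (simp add: enn_powr_cmult)
  also have "\<dots> = ennreal c * Lr_norm_on r S \<phi>"
    using False unfolding cp by (simp add: Lr_norm_on_def p_def)
  finally show ?thesis by simp
qed

lemma Lr_union:
  assumes r: "1 \<le> r" and A[measurable]: "A \<in> sets borel" and B[measurable]: "B \<in> sets borel"
    and T[measurable]: "T \<in> sets borel"
    and \<phi>[measurable]: "\<phi> \<in> borel_measurable borel" and TAB: "T \<subseteq> A \<union> B"
  shows "Lr_norm_on r T \<phi> \<le> Lr_norm_on r A \<phi> + Lr_norm_on r B \<phi>"
proof (cases "r = \<infinity>")
  case True
  define E1 where "E1 = esssup lborel (\<lambda>\<tau>. indicator A \<tau> * \<phi> \<tau>)"
  define E2 where "E2 = esssup lborel (\<lambda>\<tau>. indicator B \<tau> * \<phi> \<tau>)"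
  have a1: "AE \<tau> in lborel. indicator A \<tau> * \<phi> \<tau> \<le> E1" unfolding E1_def by (rule esssup_AE)
  have a2: "AE \<tau> in lborel. indicator B \<tau> * \<phi> \<tau> \<le> E2" unfolding E2_def by (rule esssup_AE)
  have pw: "indicator T \<tau> * \<phi> \<tau> \<le> indicator A \<tau> * \<phi> \<tau> + indicator B \<tau> * \<phi> \<tau>" for \<tau>
    using TAB by (auto simp: indicator_def)
  have "AE \<tau> in lborel. indicator T \<tau> * \<phi> \<tau> \<le> E1 + E2"
    using a1 a2 proof eventually_elim
    case (elim \<tau>)
    then show ?case using pw[of \<tau>] add_mono order_trans by blast
  qed
  then have "esssup lborel (\<lambda>\<tau>. indicator T \<tau> * \<phi> \<tau>) \<le> E1 + E2"
    by (intro esssup_I) auto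
  then show ?thesis using True by (simp add: Lr_norm_on_def E1_def E2_def)
next
  case False
  define p where "p = real_of_ereal r"
  have p: "p \<ge> 1" using r_real[OF r False] p_def by simp
  have pw: "indicator T \<tau> * enn_powr (\<phi> \<tau>) p \<le> indicator A \<tau> * enn_powr (\<phi> \<tau>) p + indicator B \<tau> * enn_powr (\<phi> \<tau>) p" for \<tau>
    using TAB by (auto simp: indicator_def)
  have "(\<integral>\<^sup>+ \<tau>. indicator T \<tau> * enn_powr (\<phi> \<tau>) p \<partial>lborel) \<le> (\<integral>\<^sup>+ \<tau>. indicator A \<tau> * enn_powr (\<phi> \<tau>) p + indicator B \<tau> * enn_powr (\<phi> \<tau>) p \<partial>lborel)"
    by (rule nn_integral_mono) (rule pw)
  also have "\<dots> = (\<integral>\<^sup>+ \<tau>. indicator A \<tau> * enn_powr (\<phi> \<tau>) p \<partial>lborel) + (\<integral>\<^sup>+ \<tau>. indicator B \<tau> * enn_powr (\<phi> \<tau>) p \<partial>lborel)"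
    by (rule nn_integral_add) measurable
  finally have le: "(\<integral>\<^sup>+ \<tau>. indicator T \<tau> * enn_powr (\<phi> \<tau>) p \<partial>lborel) \<le> \<dots>" .
  have "enn_powr (\<integral>\<^sup>+ \<tau>. indicator T \<tau> * enn_powr (\<phi> \<tau>) p \<partial>lborel) (1/p)
     \<le> enn_powr ((\<integral>\<^sup>+ \<tau>. indicator A \<tau> * enn_powr (\<phi> \<tau>) p \<partial>lborel) + (\<integral>\<^sup>+ \<tau>. indicator B \<tau> * enn_powr (\<phi> \<tau>) p \<partial>lborel)) (1/p)"
    using p by (intro enn_powr_mono le) auto
  also have "\<dots> \<le> enn_powr (\<integral>\<^sup>+ \<tau>. indicator A \<tau> * enn_powr (\<phi> \<tau>) p \<partial>lborel) (1/p) + enn_powr (\<integral>\<^sup>+ \<tau>. indicator B \<tau> * enn_powr (\<phi> \<tau>) p \<partial>lborel) (1/p)"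
    using p by (intro enn_powr_subadd) auto
  finally show ?thesis using False by (simp add: Lr_norm_on_def p_def)
qed

lemma CL_alt: "1 \<le> r \<Longrightarrow> CL_norm r s I g =
   (\<integral>\<^sup>+ j. ennreal (2 powr (real_of_int j * s)) * Lr_norm_on r (I j) (g j) \<partial>count_space UNIV)"
  unfolding CL_norm_def by (intro nn_integral_cong) (auto simp: Lr_empty)

lemma key_facts:
  fixes \<epsilon> \<mu> lam \<tau> :: real and k0 j :: int
  assumes "0 < \<epsilon>" "0 < \<mu>" "0 \<le> \<tau>"
  defines "x \<equiv> \<epsilon> * bfun \<mu> lam \<tau>"
  shows "x > 0"
    and "j \<le> Jfun \<epsilon> \<mu> lam k0 \<tau> \<Longrightarrow> 2 powr (real_of_int j + real_of_int k0) \<le> 1 / x"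
    and "Jfun \<epsilon> \<mu> lam k0 \<tau> < j \<Longrightarrow> 1 \<le> 2 powr (real_of_int j + real_of_int k0) * x"
proof -
  show x: "x > 0" using assms by (simp add: x_def bfun_def)
  define L where "L = log 2 (1 / x)"
  have J: "Jfun \<epsilon> \<mu> lam k0 \<tau> = \<lfloor>L\<rfloor> - k0" by (simp add: Jfun_def L_def x_def)
  {
    assume "j \<le> Jfun \<epsilon> \<mu> lam k0 \<tau>"
    then have "real_of_int j + real_of_int k0 \<le> L" using J of_int_floor_le[of L] by linarith
    then show "2 powr (real_of_int j + real_of_int k0) \<le> 1 / x"
      using x unfolding L_def by (simp add: le_log_iff)
  }
  {
    assume "Jfun \<epsilon> \<mu> lam k0 \<tau> < j"
    then have "L < real_of_int j + real_of_int k0" using J floor_less_iff[of L] by linarith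
    then have "1 / x < 2 powr (real_of_int j + real_of_int k0)"
      using x unfolding L_def by (simp add: log_less_iff)
    then show "1 \<le> 2 powr (real_of_int j + real_of_int k0) * x"
      using x by (simp add: field_simps)
  }
qed

theorem lemma3p1:
  fixes \<epsilon> \<mu> lam s t :: real and k0 :: int and r :: ereal
    and g :: "int \<Rightarrow> real \<Rightarrow> ennreal"
  assumes "0 < \<epsilon>" "\<epsilon> \<le> 1" "0 < \<mu>" "lam \<le> 1"
    and "0 \<le> s" "1 \<le> r" "0 < t"
    and "\<And>j. g j \<in> borel_measurable lborel"
  shows "(CL_norm r s (\<lambda>j. {0..t}) g
           \<le> CL_norm r s (Ilow \<epsilon> \<mu> lam k0 t) g
             + ennreal (2 powr real_of_int k0)
               * CL_norm r (s + 1) (Ihigh \<epsilon> \<mu> lam k0 t)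
                   (\<lambda>j \<tau>. ennreal (\<epsilon> * bfun \<mu> lam \<tau>) * g j \<tau>))
       \<and> (CL_norm r s (\<lambda>j. {0..t}) g
           \<le> ennreal (2 powr (- real_of_int k0))
               * CL_norm r (s - 1) (Ilow \<epsilon> \<mu> lam k0 t)
                   (\<lambda>j \<tau>. ennreal (1 / (\<epsilon> * bfun \<mu> lam \<tau>)) * g j \<tau>)
             + CL_norm r s (Ihigh \<epsilon> \<mu> lam k0 t) g)"
proof -
  note r = assms(6)
  have gm[measurable]: "g j \<in> borel_measurable borel" for j using assms(8)[of j] by simp
  define J where "J = Jfun \<epsilon> \<mu> lam k0"
  define X where "X = (\<lambda>\<tau>. \<epsilon> * bfun \<mu> lam \<tau>)"
  have Xm[measurable]: "X \<in> borel_measurable borel" unfolding X_def bfun_def by measurable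
  have Jm[measurable]: "J \<in> borel_measurable borel" unfolding J_def by measurable
  define T where "T = {0..t}"
  define A where "A = (\<lambda>j. Ilow \<epsilon> \<mu> lam k0 t j)"
  define B where "B = (\<lambda>j. {\<tau> \<in> T. J \<tau> < j})"
  define H where "H = (\<lambda>j. Ihigh \<epsilon> \<mu> lam k0 t j)"
  have Tm[measurable]: "T \<in> sets borel" unfolding T_def by simp
  have Am[measurable]: "A j \<in> sets borel" for j
    unfolding A_def Ilow_def J_def[symmetric] by measurable
  have Bm[measurable]: "B j \<in> sets borel" for j unfolding B_def by measurable
  have Hm[measurable]: "H j \<in> sets borel" for j
    unfolding H_def Ihigh_def J_def[symmetric] by measurable
  have TAB: "T \<subseteq> A j \<union> B j" for j
    by (auto simp: T_def A_def B_def Ilow_def J_def)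
  have BH: "B j \<subseteq> H j" for j
    by (auto simp: T_def H_def B_def Ihigh_def J_def)
  have XA: "2 powr (real_of_int j + real_of_int k0) \<le> 1 / X \<tau>" if "\<tau> \<in> A j" for j \<tau>
    using that key_facts(2)[OF assms(1,3), of \<tau> j lam k0] by (auto simp: A_def Ilow_def X_def)
  have XB: "1 \<le> 2 powr (real_of_int j + real_of_int k0) * X \<tau>" if "\<tau> \<in> B j" for j \<tau>
    using that key_facts(3)[OF assms(1,3), of \<tau> lam k0 j] by (auto simp: B_def T_def X_def J_def)
  have Xpos: "X \<tau> > 0" if "\<tau> \<in> T" for \<tau>
    using that key_facts(1)[OF assms(1,3), of \<tau> lam] by (auto simp: T_def X_def)
  have AT: "A j \<subseteq> T" for j by (auto simp: A_def Ilow_def T_def)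
  have BT: "B j \<subseteq> T" for j by (auto simp: B_def)
  define F where "F = (\<lambda>j. Lr_norm_on r T (g j))"
  define FA where "FA = (\<lambda>j. Lr_norm_on r (A j) (g j))"
  define FB where "FB = (\<lambda>j. Lr_norm_on r (B j) (g j))"
  define FH where "FH = (\<lambda>j. Lr_norm_on r (H j) (g j))"
  define GH where "GH = (\<lambda>j. Lr_norm_on r (H j) (\<lambda>\<tau>. ennreal (X \<tau>) * g j \<tau>))"
  define GA where "GA = (\<lambda>j. Lr_norm_on r (A j) (\<lambda>\<tau>. ennreal (1 / X \<tau>) * g j \<tau>))"
  define K where "K = (\<lambda>j::int. 2 powr (real_of_int j + real_of_int k0))"
  have Kpos: "K j > 0" for j by (simp add: K_def)
  have split: "F j \<le> FA j + FB j" for j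
    unfolding F_def FA_def FB_def by (rule Lr_union[OF r Am Bm Tm gm TAB])
  have FBH: "FB j \<le> FH j" for j
    unfolding FB_def FH_def by (rule Lr_mono[OF r Bm gm BH]) simp
  have FBG: "FB j \<le> ennreal (K j) * GH j" for j
  proof -
    have "FB j \<le> Lr_norm_on r (B j) (\<lambda>\<tau>. ennreal (K j) * (ennreal (X \<tau>) * g j \<tau>))"
      unfolding FB_def
    proof (rule Lr_mono[OF r Bm gm order_refl])
      fix \<tau> assume \<tau>: "\<tau> \<in> B j"
      have "1 \<le> K j * X \<tau>" using XB[OF \<tau>] by (simp add: K_def)
      then have "1 \<le> ennreal (K j * X \<tau>)" by (simp add: ennreal_1[symmetric] del: ennreal_1)
      then have "1 * g j \<tau> \<le> ennreal (K j * X \<tau>) * g j \<tau>" by (rule mult_right_mono) simp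
      also have "\<dots> = ennreal (K j) * (ennreal (X \<tau>) * g j \<tau>)"
      proof -
        have "X \<tau> > 0" using Xpos \<tau> BT by auto
        then show ?thesis using Kpos[of j] ennreal_mult[of "K j" "X \<tau>"] by (simp add: mult.assoc)
      qed
      finally show "g j \<tau> \<le> ennreal (K j) * (ennreal (X \<tau>) * g j \<tau>)" by simp
    qed
    also have "\<dots> \<le> ennreal (K j) * Lr_norm_on r (B j) (\<lambda>\<tau>. ennreal (X \<tau>) * g j \<tau>)"
      by (rule Lr_scale[OF r Bm _ Kpos]) measurable
    also have "\<dots> \<le> ennreal (K j) * GH j"
      unfolding GH_def by (intro mult_left_mono Lr_mono[OF r Bm _ BH]) auto
    finally show ?thesis .
  qed
  have FAG: "FA j \<le> ennreal (1 / K j) * GA j" for j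
  proof -
    have "FA j \<le> Lr_norm_on r (A j) (\<lambda>\<tau>. ennreal (1 / K j) * (ennreal (1 / X \<tau>) * g j \<tau>))"
      unfolding FA_def
    proof (rule Lr_mono[OF r Am gm order_refl])
      fix \<tau> assume \<tau>: "\<tau> \<in> A j"
      have xp: "X \<tau> > 0" using Xpos \<tau> AT by auto
      have "1 \<le> (1 / K j) * (1 / X \<tau>)" using XA[OF \<tau>] Kpos[of j] xp
        by (simp add: K_def field_simps)
      then have "1 \<le> ennreal ((1 / K j) * (1 / X \<tau>))" by (metis ennreal_1 ennreal_leI)
      then have "1 * g j \<tau> \<le> ennreal ((1 / K j) * (1 / X \<tau>)) * g j \<tau>" by (rule mult_right_mono) simp
      also have "\<dots> = ennreal (1 / K j) * (ennreal (1 / X \<tau>) * g j \<tau>)"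
        using Kpos[of j] xp ennreal_mult[of "1 / K j" "1 / X \<tau>"] by (simp add: mult.assoc)
      finally show "g j \<tau> \<le> ennreal (1 / K j) * (ennreal (1 / X \<tau>) * g j \<tau>)" by simp
    qed
    also have "\<dots> \<le> ennreal (1 / K j) * GA j"
      unfolding GA_def by (rule Lr_scale[OF r Am _]) (use Kpos[of j] in auto)
    finally show ?thesis .
  qed
  define P where "P = (\<lambda>(j::int) (s::real). ennreal (2 powr (real_of_int j * s)))"
  have P1: "P j s * ennreal (K j) = ennreal (2 powr real_of_int k0) * P j (s + 1)" for j
    by (simp add: P_def K_def ennreal_mult[symmetric] powr_add[symmetric] algebra_simps)
  have P2: "P j s * ennreal (1 / K j) = ennreal (2 powr (- real_of_int k0)) * P j (s - 1)" for j
    by (simp add: P_def K_def ennreal_mult[symmetric] powr_add[symmetric] powr_minus_divide[symmetric] algebra_simps)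
  have L: "CL_norm r s (\<lambda>j. {0..t}) g = (\<integral>\<^sup>+ j. P j s * F j \<partial>count_space UNIV)"
    by (simp add: CL_alt[OF r] P_def F_def T_def)
  have first: "CL_norm r s (\<lambda>j. {0..t}) g \<le> CL_norm r s (Ilow \<epsilon> \<mu> lam k0 t) g
             + ennreal (2 powr real_of_int k0)
               * CL_norm r (s + 1) (Ihigh \<epsilon> \<mu> lam k0 t)
                   (\<lambda>j \<tau>. ennreal (\<epsilon> * bfun \<mu> lam \<tau>) * g j \<tau>)"
  proof -
    have "(\<integral>\<^sup>+ j. P j s * F j \<partial>count_space UNIV) \<le>
          (\<integral>\<^sup>+ j. P j s * FA j + ennreal (2 powr real_of_int k0) * (P j (s+1) * GH j) \<partial>count_space UNIV)"
    proof (rule nn_integral_mono)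
      fix j
      have "P j s * F j \<le> P j s * (FA j + ennreal (K j) * GH j)"
        using split[of j] FBG[of j] by (intro mult_left_mono) (auto intro: order_trans add_left_mono)
      also have "\<dots> = P j s * FA j + ennreal (2 powr real_of_int k0) * (P j (s+1) * GH j)"
        using P1[of j] by (simp add: distrib_left mult.assoc[symmetric])
      finally show "P j s * F j \<le> \<dots>" .
    qed
    also have "\<dots> = (\<integral>\<^sup>+ j. P j s * FA j \<partial>count_space UNIV) + ennreal (2 powr real_of_int k0) * (\<integral>\<^sup>+ j. P j (s+1) * GH j \<partial>count_space UNIV)"
      by (simp add: nn_integral_add nn_integral_cmult)
    finally show ?thesis unfolding L
      by (simp add: CL_alt[OF r] P_def FA_def GH_def A_def H_def X_def)
  qed
  have second: "CL_norm r s (\<lambda>j. {0..t}) g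
           \<le> ennreal (2 powr (- real_of_int k0))
               * CL_norm r (s - 1) (Ilow \<epsilon> \<mu> lam k0 t)
                   (\<lambda>j \<tau>. ennreal (1 / (\<epsilon> * bfun \<mu> lam \<tau>)) * g j \<tau>)
             + CL_norm r s (Ihigh \<epsilon> \<mu> lam k0 t) g"
  proof -
    have "(\<integral>\<^sup>+ j. P j s * F j \<partial>count_space UNIV) \<le>
          (\<integral>\<^sup>+ j. ennreal (2 powr (- real_of_int k0)) * (P j (s-1) * GA j) + P j s * FH j \<partial>count_space UNIV)"
    proof (rule nn_integral_mono)
      fix j
      have "P j s * F j \<le> P j s * (ennreal (1 / K j) * GA j + FH j)"
        using split[of j] FBH[of j] FAG[of j] by (intro mult_left_mono) (auto intro: order_trans add_mono)
      also have "\<dots> = ennreal (2 powr (- real_of_int k0)) * (P j (s-1) * GA j) + P j s * FH j"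
        using P2[of j] by (simp add: distrib_left mult.assoc[symmetric])
      finally show "P j s * F j \<le> \<dots>" .
    qed
    also have "\<dots> = ennreal (2 powr (- real_of_int k0)) * (\<integral>\<^sup>+ j. P j (s-1) * GA j \<partial>count_space UNIV) + (\<integral>\<^sup>+ j. P j s * FH j \<partial>count_space UNIV)"
      by (simp add: nn_integral_add nn_integral_cmult)
    finally show ?thesis unfolding L
      by (simp add: CL_alt[OF r] P_def FH_def GA_def A_def H_def X_def)
  qed
  show ?thesis using first second by simp
qed

end
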